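(* The group $(\delta+\mathbb{K}^m\langle\langle X\rangle\rangle,\circ,\delta)$ is an analytic Lie group (with respect to the Fréchet topology).
   Context: $\mathbb{K}\in\{\mathbb{R},\mathbb{C}\}$. $X=\{x_0,x_1,\ldots,x_m\}$ is a finite alphabet, $X^\ast$ its words (including $\emptyset$). $\mathbb{K}^m\langle\langle X\rangle\rangle$ is the space of maps $X^\ast\to\mathbb{K}^m$ with the Fréchet (product) topology from $\prod_{\eta}\mathbb{K}^m$. $\delta$ is a formal symbol and $\delta+\mathbb{K}^m\langle\langle X\rangle\rangle=\{c_\delta:=\delta+c\}$ is identified with $\mathbb{K}^m\langle\langle X\rangle\rangle$ as a manifold. The shuffle product $\sqcup\!\sqcup$ is determined on words by $(x_i\eta)\sqcup\!\sqcup(x_j\xi)=x_i(\eta\sqcup\!\sqcup(x_j\xi))+x_j((x_i\eta)\sqcup\!\sqcup\xi)$, $\eta\sqcup\!\sqcup\emptyset=\emptyset\sqcup\!\sqcup\eta=\eta$. Mixed composition: for $d$ with components $d[1],\ldots,d[m]$ and $d[0]:=0$, let $\phi_d(\emptyset)=\mathrm{id}$, $\phi_d(x_i\eta)=\phi_d(x_i)\circ\phi_d(\eta)$, $\phi_d(x_i)(e)=x_ie+x_0(d[i]\sqcup\!\sqcup e)$, and $c\,\tilde\circ\,d_\delta=\sum_\eta(c,\eta)\phi_d(\eta)(\mathbf{1})$ with $\mathbf{1}=1\cdot\emptyset$. The group product is $c_\delta\circ d_\delta=\delta+d+c\,\tilde\circ\,d_\delta$ with identity $\delta$. An analytic Lie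 group is a group with an analytic manifold structure making multiplication and inversion analytic, analyticity in the Bastiani sense (complex analytic = continuous with continuous iterated directional derivatives of all orders over $\mathbb{C}$; real analytic = extends to a complex analytic map on an open neighbourhood in the complexification). *)

theory Defs
  imports "HOL-Analysis.Analysis"
begin

text \<open>The alphabet X = {x_0, x_1, ..., x_m} is encoded as the type 'm option, where
  'm is a finite type with m elements: None stands for x_0 and Some i for x_i.
  A K^m-valued series c is encoded as a function on pairs (word, component index),
  i.e. c (eta, j) is the j-th component of the coefficient (c, eta).\<close>

type_synonym 'm word = "'m option list"
type_synonym ('m, 'k) ser = "'m word \<times> 'm \<Rightarrow> 'k"

text \<open>Shuffle coefficient: the coefficient of the word w in the shuffle product u sh v.\<close>
fun shcoef :: "'a list \<Rightarrow> 'a list \<Rightarrow> 'a list \<Rightarrow> nat" where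
  "shcoef [] v w = (if v = w then 1 else 0)"
| "shcoef (a # u) [] w = (if a # u = w then 1 else 0)"
| "shcoef (a # u) (b # v) [] = 0"
| "shcoef (a # u) (b # v) (c # w) =
     (if a = c then shcoef u (b # v) w else 0) + (if b = c then shcoef (a # u) v w else 0)"

text \<open>Shuffle product of scalar series (continuous bilinear extension; only pairs with
  length u + length v = length w contribute, so the sum is finite).\<close>
definition shuffle :: "('m::finite word \<Rightarrow> 'k::comm_ring_1) \<Rightarrow> ('m word \<Rightarrow> 'k) \<Rightarrow> 'm word \<Rightarrow> 'k" where
  "shuffle a b w = (\<Sum>(u, v) \<in> {u :: 'm word. length u \<le> length w} \<times> {v :: 'm word. length v \<le> length w}.
       a u * b v * of_nat (shcoef u v w))"

definition lcons :: "'m option \<Rightarrow> ('m word \<Rightarrow> 'k::zero) \<Rightarrow> 'm word \<Rightarrow> 'k" where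
  "lcons a e w = (case w of [] \<Rightarrow> 0 | b # w' \<Rightarrow> if b = a then e w' else 0)"

definition dcomp :: "('m, 'k::zero) ser \<Rightarrow> 'm option \<Rightarrow> 'm word \<Rightarrow> 'k" where
  "dcomp d a = (case a of None \<Rightarrow> (\<lambda>_. 0) | Some j \<Rightarrow> (\<lambda>w. d (w, j)))"

definition phi_letter :: "('m::finite, 'k::comm_ring_1) ser \<Rightarrow> 'm option \<Rightarrow> ('m word \<Rightarrow> 'k) \<Rightarrow> 'm word \<Rightarrow> 'k" where
  "phi_letter d a e = (\<lambda>w. lcons a e w + lcons None (shuffle (dcomp d a) e) w)"

primrec phi :: "('m::finite, 'k::comm_ring_1) ser \<Rightarrow> 'm word \<Rightarrow> ('m word \<Rightarrow> 'k) \<Rightarrow> 'm word \<Rightarrow> 'k" where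
  "phi d [] e = e"
| "phi d (a # eta) e = phi_letter d a (phi d eta e)"

definition one_ser :: "'m word \<Rightarrow> 'k::{zero,one}" where
  "one_ser w = (if w = [] then 1 else 0)"

text \<open>Since phi_d(eta)(1)
  is supported on words of length >= length eta, the coefficient at xi is the finite sum
  over eta with length eta <= length xi (this is the limit in the Frechet topology).\<close>
definition mixed_comp :: "('m::finite, 'k::comm_ring_1) ser \<Rightarrow> ('m, 'k) ser \<Rightarrow> ('m, 'k) ser" where
  "mixed_comp c d = (\<lambda>(xi, j). \<Sum>eta \<in> {eta :: 'm word. length eta \<le> length xi}.
       c (eta, j) * phi d eta one_ser xi)"

text \<open>Group product in the coordinates c_delta = delta + c:
  c_delta o d_delta = delta + d + c ~o d_delta; identity delta corresponds to 0.\<close>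
definition gmult :: "('m::finite, 'k::comm_ring_1) ser \<Rightarrow> ('m, 'k) ser \<Rightarrow> ('m, 'k) ser" where
  "gmult c d = (\<lambda>p. d p + mixed_comp c d p)"

text \<open>Iterated directional derivatives d^k f(x; v_1, ..., v_k) over C, computed
  coordinatewise (limits in the product topology are coordinatewise).\<close>
primrec cdd :: "(('i \<Rightarrow> complex) \<Rightarrow> ('j \<Rightarrow> complex)) \<Rightarrow> ('i \<Rightarrow> complex) list \<Rightarrow> ('i \<Rightarrow> complex) \<Rightarrow> 'j \<Rightarrow> complex" where
  "cdd f [] x = f x"
| "cdd f (v # vs) x = (\<lambda>j. Lim (at (0::complex))
       (\<lambda>t. (cdd f vs (\<lambda>i. x i + t * v i) j - cdd f vs x j) / t))"

text \<open>Complex analytic in the Bastiani sense on an open set U: continuous, all iterated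
  directional derivatives (over C) exist, and each d^k f is jointly continuous on U x E^k
  (E^k is represented by sequences of directions of which the first k are used).\<close>
definition bastiani_holomorphic_on :: "(('i \<Rightarrow> complex) \<Rightarrow> ('j \<Rightarrow> complex)) \<Rightarrow> ('i \<Rightarrow> complex) set \<Rightarrow> bool" where
  "bastiani_holomorphic_on f U \<longleftrightarrow>
     open U \<and> continuous_on U f \<and>
     (\<forall>x \<in> U. \<forall>v vs. ((\<lambda>t::complex. (\<lambda>j. (cdd f vs (\<lambda>i. x i + t * v i) j - cdd f vs x j) / t))
                         \<longlongrightarrow> cdd f (v # vs) x) (at 0)) \<and>
     (\<forall>k. continuous_on (U \<times> UNIV) (\<lambda>(x, V :: nat \<Rightarrow> 'i \<Rightarrow> complex). cdd f (map V [0..<k]) x))"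

definition bastiani_real_analytic_on :: "(('i \<Rightarrow> real) \<Rightarrow> ('j \<Rightarrow> real)) \<Rightarrow> ('i \<Rightarrow> real) set \<Rightarrow> bool" where
  "bastiani_real_analytic_on f U \<longleftrightarrow>
     open U \<and>
     (\<exists>V g. open V \<and> (\<lambda>x. complex_of_real \<circ> x) ` U \<subseteq> V \<and> bastiani_holomorphic_on g V \<and>
            (\<forall>x \<in> U. g (complex_of_real \<circ> x) = complex_of_real \<circ> f x))"

text \<open>The manifold E x E is identified with functions on the disjoint union of index sets.\<close>
definition analytic_lie_group_C :: "(('i \<Rightarrow> complex) \<Rightarrow> ('i \<Rightarrow> complex) \<Rightarrow> ('i \<Rightarrow> complex)) \<Rightarrow> ('i \<Rightarrow> complex) \<Rightarrow> bool" where
  "analytic_lie_group_C gm e \<longleftrightarrow>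
     (\<forall>a b c. gm (gm a b) c = gm a (gm b c)) \<and>
     (\<forall>a. gm a e = a \<and> gm e a = a) \<and>
     (\<exists>inv. (\<forall>a. gm a (inv a) = e \<and> gm (inv a) a = e) \<and> bastiani_holomorphic_on inv UNIV) \<and>
     bastiani_holomorphic_on (\<lambda>z. gm (z \<circ> Inl) (z \<circ> Inr)) UNIV"

definition analytic_lie_group_R :: "(('i \<Rightarrow> real) \<Rightarrow> ('i \<Rightarrow> real) \<Rightarrow> ('i \<Rightarrow> real)) \<Rightarrow> ('i \<Rightarrow> real) \<Rightarrow> bool" where
  "analytic_lie_group_R gm e \<longleftrightarrow>
     (\<forall>a b c. gm (gm a b) c = gm a (gm b c)) \<and>
     (\<forall>a. gm a e = a \<and> gm e a = a) \<and>
     (\<exists>inv. (\<forall>a. gm a (inv a) = e \<and> gm (inv a) a = e) \<and> bastiani_real_analytic_on inv UNIV) \<and>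
     bastiani_real_analytic_on (\<lambda>z. gm (z \<circ> Inl) (z \<circ> Inr)) UNIV"

end

theory Submission
  imports Defs
begin


definition dtl :: "'a \<Rightarrow> ('a list \<Rightarrow> 'k) \<Rightarrow> 'a list \<Rightarrow> 'k" where
  "dtl c a = (\<lambda>u. a (c # u))"

definition LW :: "nat \<Rightarrow> 'm::finite word set" where
  "LW n = {u. length u \<le> n}"

lemma finite_LW[simp]: "finite (LW n :: 'm::finite word set)"
proof -
  have "LW n = {xs :: 'm word. set xs \<subseteq> UNIV \<and> length xs \<le> n}" by (auto simp: LW_def)
  then show ?thesis using finite_lists_length_le[of "UNIV :: 'm option set" n] by simp
qed

lemma shcoef_Nil2[simp]: "shcoef u [] w = (if u = w then 1 else 0)"
  by (cases u) auto

lemma shcoef_len: "shcoef u v w \<noteq> 0 \<Longrightarrow> length u + length v = length w"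
  by (induction u v w rule: shcoef.induct) (auto split: if_splits)

lemma shcoef_len'[dest]: "x * y * of_nat (shcoef u v w) \<noteq> (0::'k::comm_ring_1) \<Longrightarrow> length u + length v = length w"
  by (metis mult_zero_right of_nat_0 shcoef_len)

lemma shcoef_Cons3: "shcoef u v (c # w) =
   (case u of [] \<Rightarrow> 0 | a # u' \<Rightarrow> if a = c then shcoef u' v w else 0) +
   (case v of [] \<Rightarrow> 0 | b # v' \<Rightarrow> if b = c then shcoef u v' w else 0)"
  by (cases u; cases v) auto

lemma shuffle_support:
  fixes a b :: "'m::finite word \<Rightarrow> 'k::comm_ring_1"
  assumes "finite S" "\<And>u v. length u + length v = length w \<Longrightarrow> (u, v) \<in> S"
  shows "shuffle a b w = (\<Sum>(u,v)\<in>S. a u * b v * of_nat (shcoef u v w))"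
proof -
  let ?Z = "{(u::'m word,v::'m word). length u + length v = length w}"
  let ?F = "\<lambda>(u,v). a u * b v * of_nat (shcoef u v w)"
  have Zsub: "?Z \<subseteq> {u :: 'm word. length u \<le> length w} \<times> {v :: 'm word. length v \<le> length w}" by auto
  have fin: "finite ({u :: 'm word. length u \<le> length w} \<times> {v :: 'm word. length v \<le> length w})"
    using finite_LW[of "length w", where 'm='m] by (simp add: LW_def)
  have "shuffle a b w = sum ?F ?Z"
    unfolding shuffle_def
    by (rule sum.mono_neutral_right[OF fin Zsub]) (auto dest: shcoef_len)
  also have "\<dots> = sum ?F S"
    by (rule sum.mono_neutral_left[OF assms(1)]) (auto dest: shcoef_len intro: assms(2))
  finally show ?thesis .
qed

lemma shuffle_Nil: "shuffle a b [] = a [] * b []"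
  by (subst shuffle_support[where S="{([],[])}"]) auto

lemma shuffle_Cons:
  fixes a b :: "'m::finite word \<Rightarrow> 'k::comm_ring_1"
  shows "shuffle a b (c # w) = shuffle (dtl c a) b w + shuffle a (dtl c b) w"
proof -
  let ?Z = "\<lambda>w. {(u::'m word,v::'m word). length u + length v = length w}"
  have finZ: "finite (?Z w)" for w
  proof -
    have "?Z w \<subseteq> LW (length w) \<times> LW (length w)" by (auto simp: LW_def)
    then show ?thesis by (rule finite_subset) simp
  qed
  have s: "shuffle x y w' = (\<Sum>(u,v)\<in>?Z w'. x u * y v * of_nat (shcoef u v w'))" for x y :: "'m word \<Rightarrow> 'k" and w'
    by (rule shuffle_support[OF finZ]) auto
  define F1 where "F1 = (\<lambda>(u::'m word, v::'m word). a u * b v *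
     of_nat (case u of [] \<Rightarrow> 0 | a' # u' \<Rightarrow> if a' = c then shcoef u' v w else 0) :: 'k)"
  define F2 where "F2 = (\<lambda>(u::'m word, v::'m word). a u * b v *
     of_nat (case v of [] \<Rightarrow> 0 | b' # v' \<Rightarrow> if b' = c then shcoef u v' w else 0) :: 'k)"
  have "shuffle a b (c # w) = sum F1 (?Z (c#w)) + sum F2 (?Z (c#w))"
    unfolding s shcoef_Cons3 F1_def F2_def
    by (simp add: sum.distrib[symmetric] distrib_left case_prod_beta)
  moreover have "sum F1 (?Z (c#w)) = shuffle (dtl c a) b w"
  proof -
    let ?g = "\<lambda>(u,v). (c # u, v)"
    have "sum F1 (?Z (c#w)) = sum F1 (?g ` ?Z w)"
    proof (rule sum.mono_neutral_right[OF finZ])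
      show "\<forall>i\<in>?Z (c#w) - ?g ` ?Z w. F1 i = 0"
      proof
        fix i assume i: "i \<in> ?Z (c#w) - ?g ` ?Z w"
        obtain u v where uv: "i = (u, v)" by force
        show "F1 i = 0"
        proof (cases u)
          case (Cons a' u')
          show ?thesis
          proof (cases "a' = c")
            case True
            with i uv Cons have "(u', v) \<in> ?Z w" "i = ?g (u', v)" by auto
            with i show ?thesis by blast
          qed (simp add: F1_def uv Cons)
        qed (simp add: F1_def uv)
      qed
    qed auto
    also have "\<dots> = sum (F1 \<circ> ?g) (?Z w)"
      by (rule sum.reindex) (auto simp: inj_on_def)
    also have "\<dots> = shuffle (dtl c a) b w"
      unfolding s by (rule sum.cong) (auto simp: F1_def dtl_def)
    finally show ?thesis .
  qed
  moreover have "sum F2 (?Z (c#w)) = shuffle a (dtl c b) w"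
  proof -
    let ?g = "\<lambda>(u,v). (u, c # v)"
    have "sum F2 (?Z (c#w)) = sum F2 (?g ` ?Z w)"
    proof (rule sum.mono_neutral_right[OF finZ])
      show "\<forall>i\<in>?Z (c#w) - ?g ` ?Z w. F2 i = 0"
      proof
        fix i assume i: "i \<in> ?Z (c#w) - ?g ` ?Z w"
        obtain u v where uv: "i = (u, v)" by force
        show "F2 i = 0"
        proof (cases v)
          case (Cons a' v')
          show ?thesis
          proof (cases "a' = c")
            case True
            with i uv Cons have "(u, v') \<in> ?Z w" "i = ?g (u, v')" by auto
            with i show ?thesis by blast
          qed (simp add: F2_def uv Cons)
        qed (simp add: F2_def uv)
      qed
    qed auto
    also have "\<dots> = sum (F2 \<circ> ?g) (?Z w)"
      by (rule sum.reindex) (auto simp: inj_on_def)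
    also have "\<dots> = shuffle a (dtl c b) w"
      unfolding s by (rule sum.cong) (auto simp: F2_def dtl_def)
    finally show ?thesis .
  qed
  ultimately show ?thesis by simp
qed

lemma shuffle_cong:
  assumes "\<And>u. length u \<le> length w \<Longrightarrow> a u = a' u" "\<And>u. length u \<le> length w \<Longrightarrow> b u = b' u"
  shows "shuffle a b w = shuffle a' b' w"
  unfolding shuffle_def by (rule sum.cong) (auto simp: assms)

lemma shuffle_add1: "shuffle (\<lambda>u. a u + a' u) b = (\<lambda>w. shuffle a b w + shuffle a' b w)"
  unfolding shuffle_def by (auto simp: sum.distrib[symmetric] algebra_simps intro!: sum.cong)

lemma shuffle_add2: "shuffle a (\<lambda>u. b u + b' u) = (\<lambda>w. shuffle a b w + shuffle a b' w)"
  unfolding shuffle_def by (auto simp: sum.distrib[symmetric] algebra_simps intro!: sum.cong)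

lemma shuffle_sum1:
  fixes f :: "'i \<Rightarrow> 'm::finite word \<Rightarrow> 'k::comm_ring_1" and w :: "'m word"
  shows "shuffle (\<lambda>u. \<Sum>i\<in>I. k i * f i u) b w = (\<Sum>i\<in>I. k i * shuffle (f i) b w)"
proof -
  let ?S = "{u :: 'm word. length u \<le> length w} \<times> {v :: 'm word. length v \<le> length w}"
  have "shuffle (\<lambda>u. \<Sum>i\<in>I. k i * f i u) b w =
     (\<Sum>p\<in>?S. \<Sum>i\<in>I. k i * (f i (fst p) * b (snd p) * of_nat (shcoef (fst p) (snd p) w)))"
    unfolding shuffle_def case_prod_beta by (simp add: sum_distrib_right mult.assoc)
  also have "\<dots> = (\<Sum>i\<in>I. \<Sum>p\<in>?S. k i * (f i (fst p) * b (snd p) * of_nat (shcoef (fst p) (snd p) w)))"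
    by (rule sum.swap)
  also have "\<dots> = (\<Sum>i\<in>I. k i * shuffle (f i) b w)"
    unfolding shuffle_def case_prod_beta by (simp add: sum_distrib_left)
  finally show ?thesis .
qed

lemma shuffle_sum2:
  fixes f :: "'i \<Rightarrow> 'm::finite word \<Rightarrow> 'k::comm_ring_1" and w :: "'m word"
  shows "shuffle a (\<lambda>u. \<Sum>i\<in>I. k i * f i u) w = (\<Sum>i\<in>I. k i * shuffle a (f i) w)"
proof -
  let ?S = "{u :: 'm word. length u \<le> length w} \<times> {v :: 'm word. length v \<le> length w}"
  have "shuffle a (\<lambda>u. \<Sum>i\<in>I. k i * f i u) w =
     (\<Sum>p\<in>?S. \<Sum>i\<in>I. k i * (a (fst p) * f i (snd p) * of_nat (shcoef (fst p) (snd p) w)))"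
    unfolding shuffle_def case_prod_beta by (simp add: sum_distrib_right sum_distrib_left mult.assoc mult.left_commute)
  also have "\<dots> = (\<Sum>i\<in>I. \<Sum>p\<in>?S. k i * (a (fst p) * f i (snd p) * of_nat (shcoef (fst p) (snd p) w)))"
    by (rule sum.swap)
  also have "\<dots> = (\<Sum>i\<in>I. k i * shuffle a (f i) w)"
    unfolding shuffle_def case_prod_beta by (simp add: sum_distrib_left)
  finally show ?thesis .
qed

lemma shuffle_sum1': "shuffle (\<lambda>u. \<Sum>i\<in>I. f i u) b w = (\<Sum>i\<in>I. shuffle (f i) b w)"
  using shuffle_sum1[where k="\<lambda>_. 1" and I=I and f=f and b=b and w=w] by simp

lemma shuffle_sum2': "shuffle a (\<lambda>u. \<Sum>i\<in>I. f i u) w = (\<Sum>i\<in>I. shuffle a (f i) w)"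
  using shuffle_sum2[where k="\<lambda>_. 1" and I=I and f=f and a=a and w=w] by simp

lemma shuffle_zero1[simp]: "shuffle (\<lambda>_. 0) b w = 0"
  unfolding shuffle_def by simp

lemma shuffle_zero2[simp]: "shuffle a (\<lambda>_. 0) w = 0"
  unfolding shuffle_def by simp

lemma shuffle_neg1: "shuffle (\<lambda>u. - a u) b w = - shuffle a b w"
  unfolding shuffle_def by (simp add: sum_negf[symmetric] case_prod_beta)

lemma dtl_apply: "dtl c a u = a (c # u)"
  by (simp add: dtl_def)

lemma dtl_shuffle: "dtl c (shuffle a b) = (\<lambda>u. shuffle (dtl c a) b u + shuffle a (dtl c b) u)"
  by (simp add: dtl_def shuffle_Cons)

lemma shuffle_comm: "shuffle a b = shuffle b a"
proof
  fix w show "shuffle a b w = shuffle b a w"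
    by (induction w arbitrary: a b) (simp_all add: shuffle_Nil shuffle_Cons mult.commute add.commute)
qed

lemma shuffle_assoc: "shuffle (shuffle a b) e = shuffle a (shuffle b e)"
proof
  fix w show "shuffle (shuffle a b) e w = shuffle a (shuffle b e) w"
  proof (induction w arbitrary: a b e)
    case Nil then show ?case by (simp add: shuffle_Nil mult.assoc)
  next
    case (Cons c w)
    show ?case
      by (simp add: shuffle_Cons dtl_shuffle shuffle_add1 shuffle_add2 Cons.IH)
  qed
qed

lemma dtl_one[simp]: "dtl c one_ser = (\<lambda>_. 0)"
  by (simp add: dtl_def one_ser_def fun_eq_iff)

lemma shuffle_one1[simp]: "shuffle one_ser b = b"
proof
  fix w show "shuffle one_ser b w = b w"
    by (induction w arbitrary: b) (simp_all add: shuffle_Nil shuffle_Cons one_ser_def[of "[]"] dtl_apply)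
qed

lemma shuffle_one2[simp]: "shuffle b one_ser = b"
  using shuffle_one1 shuffle_comm by metis


definition comp1 :: "('m::finite word \<Rightarrow> 'k::comm_ring_1) \<Rightarrow> ('m, 'k) ser \<Rightarrow> 'm word \<Rightarrow> 'k" where
  "comp1 c d xi = (\<Sum>eta\<in>LW (length xi). c eta * phi d eta one_ser xi)"

lemma mixed_comp_comp1: "mixed_comp c d (xi, j) = comp1 (\<lambda>eta. c (eta, j)) d xi"
  by (simp add: mixed_comp_def comp1_def LW_def)

lemma lcons_Nil[simp]: "lcons a e [] = 0"
  by (simp add: lcons_def)

lemma lcons_Cons[simp]: "lcons a e (b # w) = (if b = a then e w else 0)"
  by (simp add: lcons_def)

lemma phi_support: "length w < length eta \<Longrightarrow> phi d eta e w = 0"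
proof (induction eta arbitrary: w)
  case Nil then show ?case by simp
next
  case (Cons a eta)
  show ?case
  proof (cases w)
    case Nil then show ?thesis by (simp add: phi_letter_def)
  next
    case (Cons b w')
    with Cons.prems have l: "length w' < length eta" by simp
    have "shuffle (dcomp d a) (phi d eta e) w' = shuffle (dcomp d a) (\<lambda>_. 0) w'"
      by (rule shuffle_cong) (use l in \<open>auto intro!: Cons.IH\<close>)
    then show ?thesis using Cons.IH[OF l] by (simp add: Cons phi_letter_def)
  qed
qed

lemma sum_LW_Suc:
  fixes f :: "'a::finite word \<Rightarrow> 'k::comm_monoid_add"
  shows "(\<Sum>eta\<in>LW (Suc n). f eta) = f [] + (\<Sum>a\<in>UNIV. \<Sum>eta\<in>LW n. f (a # eta))"
proof -
  have e: "LW (Suc n) = insert [] ((\<lambda>(a, eta). a # eta) ` (UNIV \<times> LW n))"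
    apply (rule set_eqI)
    subgoal for x by (cases x) (auto simp: LW_def image_iff)
    done
  have "(\<Sum>eta\<in>LW (Suc n). f eta) = f [] + sum f ((\<lambda>(a, eta). a # eta) ` (UNIV \<times> LW n))"
    unfolding e by (subst sum.insert) (auto intro!: finite_imageI)
  also have "sum f ((\<lambda>(a, eta). a # eta) ` (UNIV \<times> LW n)) = sum (f \<circ> (\<lambda>(a, eta). a # eta)) (UNIV \<times> LW n)"
    by (rule sum.reindex) (auto simp: inj_on_def)
  also have "\<dots> = (\<Sum>(a, eta)\<in>UNIV \<times> LW n. f (a # eta))"
    by (simp add: o_def case_prod_beta)
  also have "\<dots> = (\<Sum>a\<in>UNIV. \<Sum>eta\<in>LW n. f (a # eta))"
    by (rule sum.cartesian_product[symmetric])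
  finally show ?thesis .
qed

lemma finite_LW'[simp]: "finite {u :: 'm::finite word. length u \<le> n}"
  using finite_LW[of n] by (simp add: LW_def)

lemma LW_0[simp]: "LW 0 = {[]}"
  by (auto simp: LW_def)

lemma comp1_ext: "length xi \<le> n \<Longrightarrow> (\<Sum>eta\<in>LW n. c eta * phi d eta one_ser xi) = comp1 c d xi"
  unfolding comp1_def
  by (rule sum.mono_neutral_right) (auto simp: LW_def phi_support)

lemma comp1_Nil[simp]: "comp1 c d [] = c []"
  by (simp add: comp1_def one_ser_def)

lemma UNIV_option_sum: "(\<Sum>a\<in>(UNIV :: 'm::finite option set). f a) = f None + (\<Sum>j\<in>UNIV. f (Some j))"
  unfolding UNIV_option_conv by (subst sum.insert) (auto simp: sum.reindex)

lemma comp1_Cons: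
  fixes c :: "'m::finite word \<Rightarrow> 'k::comm_ring_1"
  shows "comp1 c d (b # w) = comp1 (dtl b c) d w +
    (if b = None then (\<Sum>j\<in>UNIV. shuffle (\<lambda>u. d (u, j)) (comp1 (dtl (Some j) c) d) w) else 0)"
proof -
  let ?P = "\<lambda>eta. phi d eta one_ser"
  have "comp1 c d (b # w) = (\<Sum>eta\<in>LW (Suc (length w)). c eta * ?P eta (b # w))"
    by (simp add: comp1_def)
  also have "\<dots> = (\<Sum>a\<in>UNIV. \<Sum>eta\<in>LW (length w). 
        (if b = a then c (a # eta) * ?P eta w else 0) + (if b = None then c (a # eta) * shuffle (dcomp d a) (?P eta) w else 0))"
  proof -
    have "c (a # eta) * ?P (a # eta) (b # w) = (if b = a then c (a # eta) * ?P eta w else 0) +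
       (if b = None then c (a # eta) * shuffle (dcomp d a) (?P eta) w else 0)" for a eta
      by (simp add: phi_letter_def distrib_left)
    then show ?thesis by (simp add: sum_LW_Suc one_ser_def)
  qed
  also have "\<dots> = (\<Sum>a\<in>UNIV. \<Sum>eta\<in>LW (length w). (if b = a then c (a # eta) * ?P eta w else 0)) +
        (\<Sum>a\<in>UNIV. \<Sum>eta\<in>LW (length w). (if b = None then c (a # eta) * shuffle (dcomp d a) (?P eta) w else 0))"
    by (simp only: sum.distrib)
  also have "(\<Sum>a\<in>UNIV. \<Sum>eta\<in>LW (length w). (if b = a then c (a # eta) * ?P eta w else 0)) = comp1 (dtl b c) d w"
  proof -
    have "(\<Sum>eta\<in>LW (length w). (if b = a then c (a # eta) * ?P eta w else 0)) =
       (if b = a then (\<Sum>eta\<in>LW (length w). c (a # eta) * ?P eta w) else 0)" for a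
      by simp
    then have "(\<Sum>a\<in>UNIV. \<Sum>eta\<in>LW (length w). (if b = a then c (a # eta) * ?P eta w else 0)) =
       (\<Sum>a\<in>UNIV. if b = a then (\<Sum>eta\<in>LW (length w). c (a # eta) * ?P eta w) else 0)"
      by (simp only:)
    also have "\<dots> = (\<Sum>eta\<in>LW (length w). c (b # eta) * ?P eta w)"
      by (subst sum.delta') auto
    finally show ?thesis by (simp add: comp1_def dtl_apply)
  qed
  also have "(\<Sum>a\<in>UNIV. \<Sum>eta\<in>LW (length w). (if b = None then c (a # eta) * shuffle (dcomp d a) (?P eta) w else 0))
      = (if b = None then (\<Sum>a\<in>UNIV. shuffle (dcomp d a) (comp1 (dtl a c) d) w) else 0)"
  proof (cases "b = None")
    case True
    have "(\<Sum>eta\<in>LW (length w). c (a # eta) * shuffle (dcomp d a) (?P eta) w)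
        = shuffle (dcomp d a) (comp1 (dtl a c) d) w" for a
    proof -
      have "(\<Sum>eta\<in>LW (length w). c (a # eta) * shuffle (dcomp d a) (?P eta) w)
          = shuffle (dcomp d a) (\<lambda>u. \<Sum>eta\<in>LW (length w). c (a # eta) * ?P eta u) w"
        by (rule shuffle_sum2[symmetric])
      also have "\<dots> = shuffle (dcomp d a) (comp1 (dtl a c) d) w"
        by (rule shuffle_cong) (auto simp: comp1_ext[symmetric] dtl_apply)
      finally show ?thesis .
    qed
    then show ?thesis using True by simp
  next
    case False
    then have bn: "(b = None) = False" by simp
    show ?thesis unfolding bn if_False by simp
  qed
  also have "(\<Sum>a\<in>UNIV. shuffle (dcomp d a) (comp1 (dtl a c) d) w) =
      (\<Sum>j\<in>UNIV. shuffle (\<lambda>u. d (u, j)) (comp1 (dtl (Some j) c) d) w)"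
    by (simp add: UNIV_option_sum dcomp_def)
  finally show ?thesis by simp
qed


lemma comp1_add: "comp1 (\<lambda>u. f u + g u) d w = comp1 f d w + comp1 g d w"
  by (simp add: comp1_def sum.distrib distrib_right)

lemma comp1_sum: "comp1 (\<lambda>u. \<Sum>i\<in>I. f i u) d w = (\<Sum>i\<in>I. comp1 (f i) d w)"
  by (simp add: comp1_def sum_distrib_right sum.swap[of _ I])

lemma comp1_zero[simp]: "comp1 (\<lambda>_. 0) d w = 0"
  by (simp add: comp1_def)

lemma comp1_neg: "comp1 (\<lambda>u. - f u) d w = - comp1 f d w"
  by (simp add: comp1_def sum_negf)

lemma dtl_comp1: "dtl b (comp1 c d) = (\<lambda>u. comp1 (dtl b c) d u +
    (if b = None then (\<Sum>j\<in>UNIV. shuffle (\<lambda>u. d (u, j)) (comp1 (dtl (Some j) c) d) u) else 0))"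
  by (rule ext) (simp only: dtl_apply comp1_Cons)

lemma comp1_if[simp]: "comp1 (\<lambda>u. if P then f u else 0) d w = (if P then comp1 f d w else 0)"
  by (cases P) simp_all

lemma shuffle_if2[simp]: "shuffle a (\<lambda>u. if P then f u else 0) w = (if P then shuffle a f w else 0)"
  by (cases P) simp_all

lemma shuffle_if1[simp]: "shuffle (\<lambda>u. if P then f u else 0) b w = (if P then shuffle f b w else 0)"
  by (cases P) simp_all

lemma comp1_shuffle:
  fixes a b :: "'m::finite word \<Rightarrow> 'k::comm_ring_1"
  shows "comp1 (shuffle a b) e w = shuffle (comp1 a e) (comp1 b e) w"
proof (induction w arbitrary: a b rule: length_induct)
  case (1 w)
  show ?case
  proof (cases w)
    case Nil then show ?thesis by (simp add: shuffle_Nil)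
  next
    case (Cons c w')
    have IH: "comp1 (shuffle a b) e u = shuffle (comp1 a e) (comp1 b e) u"
      if "length u \<le> length w'" for u a b using 1 Cons that by auto
    let ?E = "\<lambda>j u. e (u, j)"
    let ?A = "comp1 a e"
    let ?B = "comp1 b e"
    let ?Ac = "comp1 (dtl c a) e"
    let ?Bc = "comp1 (dtl c b) e"
    let ?Ax = "\<lambda>j. comp1 (dtl (Some j) a) e"
    let ?Bx = "\<lambda>j. comp1 (dtl (Some j) b) e"
    have L1: "comp1 (dtl c (shuffle a b)) e w' = shuffle ?Ac ?B w' + shuffle ?A ?Bc w'"
      by (simp add: dtl_shuffle comp1_add IH    )
    have L2: "shuffle (?E j) (comp1 (dtl (Some j) (shuffle a b)) e) w' =
        shuffle (?E j) (\<lambda>u. shuffle (?Ax j) ?B u + shuffle ?A (?Bx j) u) w'" for j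
      by (rule shuffle_cong) (simp_all add: dtl_shuffle comp1_add IH    )
    have L: "comp1 (shuffle a b) e w = shuffle ?Ac ?B w' + shuffle ?A ?Bc w' +
        (if c = None then (\<Sum>j\<in>UNIV. shuffle (?E j) (\<lambda>u. shuffle (?Ax j) ?B u + shuffle ?A (?Bx j) u) w') else 0)"
      using L1 L2 by (simp add: Cons comp1_Cons )
    have dA: "dtl c ?A = (\<lambda>u. ?Ac u + (if c = None then (\<Sum>j\<in>UNIV. shuffle (?E j) (?Ax j) u) else 0))"
      by (simp add:  dtl_comp1   )
    have dB: "dtl c ?B = (\<lambda>u. ?Bc u + (if c = None then (\<Sum>j\<in>UNIV. shuffle (?E j) (?Bx j) u) else 0))"
      by (simp add:  dtl_comp1   )
    have R: "shuffle (comp1 a e) (comp1 b e) w = shuffle ?Ac ?B w' + shuffle ?A ?Bc w' +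
        (if c = None then (\<Sum>j\<in>UNIV. shuffle (shuffle (?E j) (?Ax j)) ?B w' + shuffle ?A (shuffle (?E j) (?Bx j)) w') else 0)"
    proof (cases "c = None")
      case True
      have "shuffle (comp1 a e) (comp1 b e) w = shuffle (dtl c ?A) ?B w' + shuffle ?A (dtl c ?B) w'"
        by (simp add: Cons shuffle_Cons  )
      also have "\<dots> = shuffle ?Ac ?B w' + (\<Sum>j\<in>UNIV. shuffle (shuffle (?E j) (?Ax j)) ?B w') +
           (shuffle ?A ?Bc w' + (\<Sum>j\<in>UNIV. shuffle ?A (shuffle (?E j) (?Bx j)) w'))"
        unfolding dA dB using True by (simp add: shuffle_add1 shuffle_add2 shuffle_sum1' shuffle_sum2')
      finally show ?thesis using True by (simp add: sum.distrib algebra_simps)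
    next
      case False
      then have cn: "(c = None) = False" by simp
      show ?thesis unfolding Cons shuffle_Cons dA dB cn if_False by (simp add: shuffle_add1 shuffle_add2)
    qed
    have eq1: "shuffle (shuffle (?E j) (?Ax j)) ?B = shuffle (?E j) (shuffle (?Ax j) ?B)" for j
      by (rule shuffle_assoc)
    have eq2: "shuffle ?A (shuffle (?E j) (?Bx j)) = shuffle (?E j) (shuffle ?A (?Bx j))" for j
      by (metis shuffle_assoc shuffle_comm)
    show ?thesis unfolding L R eq1 eq2 by (simp add: shuffle_add2)
  qed
qed

lemma gmult_comp: "(\<lambda>u. gmult d e (u, j)) = (\<lambda>u. e (u, j) + comp1 (\<lambda>eta. d (eta, j)) e u)"
  by (simp add: gmult_def mixed_comp_comp1)

lemma comp1_comp1:
  fixes c :: "'m::finite word \<Rightarrow> 'k::comm_ring_1"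
  shows "comp1 (comp1 c d) e w = comp1 c (gmult d e) w"
proof (induction w arbitrary: c rule: length_induct)
  case (1 w)
  show ?case
  proof (cases w)
    case Nil then show ?thesis by simp
  next
    case (Cons b w')
    have IH: "comp1 (comp1 c d) e u = comp1 c (gmult d e) u"
      if "length u \<le> length w'" for u c using 1 Cons that by auto
    define G where "G = gmult d e"
    define cj where "cj j = dtl (Some j) c" for j
    have dS: "dtl (Some j) (comp1 c d) = comp1 (cj j) d" for j
      by (simp add: dtl_comp1 cj_def)
    have X: "comp1 (dtl b (comp1 c d)) e w' = comp1 (dtl b c) G w' +
       (if b = None then (\<Sum>j\<in>UNIV. shuffle (comp1 (\<lambda>u. d (u, j)) e) (comp1 (cj j) G) w') else 0)"
    proof -
      have "comp1 (dtl b (comp1 c d)) e w' = comp1 (comp1 (dtl b c) d) e w' +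
         (if b = None then (\<Sum>j\<in>UNIV. comp1 (shuffle (\<lambda>u. d (u, j)) (comp1 (cj j) d)) e w') else 0)"
        by (simp add: dtl_comp1 comp1_add comp1_sum cj_def)
      also have "\<dots> = comp1 (dtl b c) G w' +
         (if b = None then (\<Sum>j\<in>UNIV. shuffle (comp1 (\<lambda>u. d (u, j)) e) (comp1 (cj j) G) w') else 0)"
      proof -
        have "shuffle (comp1 (\<lambda>u. d (u, j)) e) (comp1 (comp1 (cj j) d) e) w' =
              shuffle (comp1 (\<lambda>u. d (u, j)) e) (comp1 (cj j) G) w'" for j
          by (rule shuffle_cong) (simp_all add: IH G_def)
        then show ?thesis by (simp add: comp1_shuffle IH G_def)
      qed
      finally show ?thesis .
    qed
    have Y: "shuffle (\<lambda>u. e (u, j)) (comp1 (dtl (Some j) (comp1 c d)) e) w' =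
             shuffle (\<lambda>u. e (u, j)) (comp1 (cj j) G) w'" for j
      unfolding dS by (rule shuffle_cong) (simp_all add: IH G_def)
    have "comp1 (comp1 c d) e w = comp1 (dtl b c) G w' +
       (if b = None then (\<Sum>j\<in>UNIV. shuffle (comp1 (\<lambda>u. d (u, j)) e) (comp1 (cj j) G) w') else 0) +
       (if b = None then (\<Sum>j\<in>UNIV. shuffle (\<lambda>u. e (u, j)) (comp1 (cj j) G) w') else 0)"
      by (simp add: Cons comp1_Cons X Y)
    also have "\<dots> = comp1 c G w"
      by (simp add: Cons comp1_Cons G_def gmult_comp shuffle_add1 sum.distrib cj_def algebra_simps)
    finally show ?thesis by (simp add: G_def)
  qed
qed

lemma comp1_unit: "comp1 c (\<lambda>_. 0) w = c w"
  by (induction w arbitrary: c) (simp_all add: comp1_Cons dtl_apply)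

lemma gmult_assoc:
  fixes a b c :: "('m::finite, 'k::comm_ring_1) ser"
  shows "gmult (gmult a b) c = gmult a (gmult b c)"
proof
  fix p :: "'m::finite word \<times> 'm"
  obtain xi j where p: "p = (xi, j)" by force
  have "gmult (gmult a b) c p = c p + comp1 (\<lambda>eta. b (eta, j)) c xi + comp1 (comp1 (\<lambda>eta. a (eta, j)) b) c xi"
    by (simp add: p gmult_def mixed_comp_comp1 comp1_add)
  also have "\<dots> = gmult a (gmult b c) p"
    by (simp add: p gmult_def mixed_comp_comp1 comp1_comp1)
  finally show "gmult (gmult a b) c p = gmult a (gmult b c) p" .
qed

lemma gmult_unit1: "gmult a (\<lambda>_. 0) = a"
  by (auto simp: fun_eq_iff gmult_def mixed_comp_comp1 comp1_unit)

lemma gmult_unit2: "gmult (\<lambda>_. 0) a = a"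
  by (auto simp: fun_eq_iff gmult_def mixed_comp_comp1)


lemma comp1_local:
  fixes c :: "'m::finite word \<Rightarrow> 'k::comm_ring_1" and d d' :: "('m, 'k) ser" and w :: "'m word"
  assumes "\<And>(u :: 'm word) j. length u < length w \<Longrightarrow> d (u, j) = d' (u, j)"
  shows "comp1 c d w = comp1 c d' w"
  using assms
proof (induction w arbitrary: c rule: length_induct)
  case (1 w)
  have P: "d (u, j) = d' (u, j)" if "length u < length w" for u :: "'m word" and j using 1(2) that by blast
  show ?case
  proof (cases w)
    case Nil then show ?thesis by simp
  next
    case (Cons b w')
    have IH: "comp1 c d u = comp1 c d' u" if "length u \<le> length w'" for u c
    proof -
      have lu: "length u < length w" using that Cons by simp
      have "d (v, j) = d' (v, j)" if "length v < length u" for v :: "'m word" and j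
        using that lu by (intro P) simp
      then show ?thesis using 1(1) lu by blast
    qed
    have S: "shuffle (\<lambda>u. d (u, j)) (comp1 (dtl (Some j) c) d) w' =
             shuffle (\<lambda>u. d' (u, j)) (comp1 (dtl (Some j) c) d') w'" for j
    proof (rule shuffle_cong)
      fix u :: "'m word" assume "length u \<le> length w'"
      then show "d (u, j) = d' (u, j)" using Cons by (intro P) simp
      show "comp1 (dtl (Some j) c) d u = comp1 (dtl (Some j) c) d' u" using IH \<open>length u \<le> length w'\<close> by blast
    qed
    have T: "comp1 (dtl b c) d w' = comp1 (dtl b c) d' w'" using IH by blast
    show ?thesis unfolding Cons comp1_Cons S T ..
  qed
qed

definition rinvstep :: "('m::finite, 'k::comm_ring_1) ser \<Rightarrow> ('m, 'k) ser \<Rightarrow> ('m, 'k) ser" where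
  "rinvstep c D = (\<lambda>(xi, j). - comp1 (\<lambda>eta. c (eta, j)) D xi)"

definition rinv :: "('m::finite, 'k::comm_ring_1) ser \<Rightarrow> ('m, 'k) ser" where
  "rinv c = (\<lambda>(xi, j). (rinvstep c ^^ Suc (length xi)) (\<lambda>_. 0) (xi, j))"

lemma rinvstep_apply: "rinvstep c D (u, j) = - comp1 (\<lambda>eta. c (eta, j)) D u"
  by (simp add: rinvstep_def)

lemma rinv_agree: "length u < n \<Longrightarrow> (rinvstep c ^^ n) (\<lambda>_. 0) (u, j) = (rinvstep c ^^ (n + k)) (\<lambda>_. 0) (u, j)"
proof (induction n arbitrary: u j)
  case 0 then show ?case by simp
next
  case (Suc n)
  have "comp1 (\<lambda>eta. c (eta, j)) ((rinvstep c ^^ n) (\<lambda>_. 0)) u = comp1 (\<lambda>eta. c (eta, j)) ((rinvstep c ^^ (n + k)) (\<lambda>_. 0)) u"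
    by (rule comp1_local) (use Suc in auto)
  then show ?case by (simp only: add_Suc funpow.simps(2) o_apply rinvstep_apply)
qed

lemma rinv_eq: "length u < n \<Longrightarrow> rinv c (u, j) = (rinvstep c ^^ n) (\<lambda>_. 0) (u, j)"
  using rinv_agree[of u "Suc (length u)" c j "n - Suc (length u)"] by (simp add: rinv_def)

lemma gmult_rinv: "gmult c (rinv c) = (\<lambda>_. 0)"
proof
  fix p :: "'a word \<times> 'a"
  obtain xi j where p: "p = (xi, j)" by force
  have "rinv c (xi, j) = rinvstep c ((rinvstep c ^^ length xi) (\<lambda>_. 0)) (xi, j)"
    unfolding rinv_def by (simp only: prod.case funpow.simps(2) o_apply)
  also have "\<dots> = - comp1 (\<lambda>eta. c (eta, j)) (rinv c) xi"
    unfolding rinvstep_apply by (rule arg_cong[where f=uminus], rule comp1_local, rule rinv_eq[symmetric])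
  finally show "gmult c (rinv c) p = 0"
    by (simp add: p gmult_def mixed_comp_comp1)
qed

lemma group_inverse:
  fixes c :: "('m::finite, 'k::comm_ring_1) ser"
  shows "gmult c (rinv c) = (\<lambda>_. 0) \<and> gmult (rinv c) c = (\<lambda>_. 0)"
proof -
  have r1: "gmult (rinv c) (rinv (rinv c)) = (\<lambda>_. 0)" by (rule gmult_rinv)
  have r2: "gmult c (rinv c) = (\<lambda>_. 0)" by (rule gmult_rinv)
  have "gmult (rinv c) c = gmult (rinv c) (gmult c (gmult (rinv c) (rinv (rinv c))))"
    unfolding r1 gmult_unit1 ..
  also have "\<dots> = gmult (gmult (rinv c) (gmult c (rinv c))) (rinv (rinv c))"
    by (simp only: gmult_assoc)
  also have "\<dots> = (\<lambda>_. 0)"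
    unfolding r2 gmult_unit1 r1 ..
  finally show ?thesis using r2 by simp
qed


inductive polyf :: "(('a \<Rightarrow> complex) \<Rightarrow> complex) \<Rightarrow> bool" where
  pconst: "polyf (\<lambda>_. k)"
| pproj: "polyf (\<lambda>x. x i)"
| padd: "polyf f \<Longrightarrow> polyf g \<Longrightarrow> polyf (\<lambda>x. f x + g x)"
| pmult: "polyf f \<Longrightarrow> polyf g \<Longrightarrow> polyf (\<lambda>x. f x * g x)"

lemma polyf_neg: "polyf f \<Longrightarrow> polyf (\<lambda>x. - f x)"
  using pmult[OF pconst[of "-1"]] by simp

lemma polyf_sum:
  assumes "\<And>i. i \<in> I \<Longrightarrow> polyf (f i)"
  shows "polyf (\<lambda>x. \<Sum>i\<in>I. f i x)"
proof (cases "finite I")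
  case True
  then show ?thesis using assms
    by (induction I rule: finite_induct) (auto intro: pconst padd)
qed (simp add: pconst)

lemma polyf_cont: "polyf f \<Longrightarrow> continuous_on UNIV f"
  by (induction rule: polyf.induct) (auto intro!: continuous_intros)

lemma polyf_subst: "polyf f \<Longrightarrow> (\<And>i. polyf (\<lambda>y. s y i)) \<Longrightarrow> polyf (\<lambda>y. f (s y))"
  by (induction rule: polyf.induct) (auto intro: polyf.intros)

lemma polyf_deriv:
  fixes f :: "('a \<Rightarrow> complex) \<Rightarrow> complex"
  shows "polyf f \<Longrightarrow> \<exists>g. polyf g \<and> (\<forall>z w. ((\<lambda>t. f (\<lambda>i. z i + t * w i)) has_field_derivative g (case_sum z w)) (at 0))"
proof (induction rule: polyf.induct)
  case (pconst k)
  then show ?case by (intro exI[of _ "\<lambda>_. 0"]) (auto intro: polyf.intros)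
next
  case (pproj i)
  show ?case
    by (intro exI[of _ "\<lambda>y. y (Inr i)"]) (auto intro!: polyf.intros derivative_eq_intros)
next
  case (padd f g)
  then obtain f' g' where "polyf f'" "polyf g'"
    "\<forall>z w. ((\<lambda>t. f (\<lambda>i. z i + t * w i)) has_field_derivative f' (case_sum z w)) (at 0)"
    "\<forall>z w. ((\<lambda>t. g (\<lambda>i. z i + t * w i)) has_field_derivative g' (case_sum z w)) (at 0)" by blast
  then show ?case
    by (intro exI[of _ "\<lambda>y. f' y + g' y"]) (auto intro!: polyf.intros DERIV_add)
next
  case (pmult f g)
  then obtain f' g' where P: "polyf f'" "polyf g'" and
    D: "\<forall>z w. ((\<lambda>t. f (\<lambda>i. z i + t * w i)) has_field_derivative f' (case_sum z w)) (at 0)"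
    "\<forall>z w. ((\<lambda>t. g (\<lambda>i. z i + t * w i)) has_field_derivative g' (case_sum z w)) (at 0)" by blast
  let ?h = "\<lambda>y. f' y * g (\<lambda>i. y (Inl i)) + g' y * f (\<lambda>i. y (Inl i))"
  have 1: "polyf (\<lambda>y. g (\<lambda>i. y (Inl i)))" by (rule polyf_subst[OF pmult.hyps(2)]) (rule pproj)
  have 2: "polyf (\<lambda>y. f (\<lambda>i. y (Inl i)))" by (rule polyf_subst[OF pmult.hyps(1)]) (rule pproj)
  have "polyf ?h"
    by (rule polyf.padd[OF polyf.pmult[OF P(1) 1] polyf.pmult[OF P(2) 2]])
  moreover have "((\<lambda>t. f (\<lambda>i. z i + t * w i) * g (\<lambda>i. z i + t * w i)) has_field_derivative ?h (case_sum z w)) (at 0)" for z w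
    using DERIV_mult[OF D(1)[rule_format, of z w] D(2)[rule_format, of z w]] by simp
  ultimately show ?case by blast
qed

lemma tendsto_coordinatewise:
  fixes F :: "'a \<Rightarrow> 'j \<Rightarrow> 'b::topological_space"
  assumes "\<And>j. ((\<lambda>t. F t j) \<longlongrightarrow> L j) G"
  shows "(F \<longlongrightarrow> L) G"
proof -
  have "limitin (product_topology (\<lambda>_. euclidean) UNIV) F L G"
    unfolding limitin_componentwise using assms by simp
  then show ?thesis by (simp add: euclidean_product_topology)
qed

definition J :: "('i \<Rightarrow> complex) \<Rightarrow> ('i \<Rightarrow> complex) list \<Rightarrow> ('i + nat \<times> 'i) \<Rightarrow> complex" where
  "J x vs = case_sum x (\<lambda>(n, i). if n < length vs then (vs ! n) i else 0)"

lemma cdd_step: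
  fixes f :: "('i \<Rightarrow> complex) \<Rightarrow> 'j \<Rightarrow> complex"
  assumes "polyf P" "\<forall>x vs. length vs = k \<longrightarrow> cdd f vs x j = P (J x vs)"
  shows "\<exists>P'. polyf P' \<and> (\<forall>x v vs. length vs = k \<longrightarrow>
     ((\<lambda>t. (cdd f vs (\<lambda>i. x i + t * v i) j - cdd f vs x j) / t) \<longlongrightarrow> P' (J x (v # vs))) (at 0) \<and>
     cdd f (v # vs) x j = P' (J x (v # vs)))"
proof -
  obtain Q where Q: "polyf Q" "\<forall>z w. ((\<lambda>t. P (\<lambda>a. z a + t * w a)) has_field_derivative Q (case_sum z w)) (at 0)"
    using polyf_deriv[OF assms(1)] by blast
  define s :: "('i + nat \<times> 'i \<Rightarrow> complex) \<Rightarrow> ('i + nat \<times> 'i) + ('i + nat \<times> 'i) \<Rightarrow> complex" where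
    "s y = case_sum (\<lambda>a. case a of Inl i \<Rightarrow> y (Inl i) | Inr (n, i) \<Rightarrow> y (Inr (Suc n, i)))
                      (\<lambda>a. case a of Inl i \<Rightarrow> y (Inr (0, i)) | Inr _ \<Rightarrow> 0)" for y
  have ps: "polyf (\<lambda>y. s y a)" for a
  proof (cases a)
    case (Inl b) then show ?thesis by (cases b) (auto simp: s_def intro: polyf.intros)
  next
    case (Inr b) then show ?thesis by (cases b) (auto simp: s_def intro: polyf.intros)
  qed
  have pP': "polyf (\<lambda>y. Q (s y))" by (rule polyf_subst[OF Q(1) ps])
  have main: "((\<lambda>t. (cdd f vs (\<lambda>i. x i + t * v i) j - cdd f vs x j) / t) \<longlongrightarrow> Q (s (J x (v # vs)))) (at 0) \<and>
     cdd f (v # vs) x j = Q (s (J x (v # vs)))" if lv: "length vs = k" for x v vs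
  proof -
    define W :: "'i + nat \<times> 'i \<Rightarrow> complex" where "W = case_sum v (\<lambda>_. 0)"
    have JW: "J (\<lambda>i. x i + t * v i) vs = (\<lambda>a. J x vs a + t * W a)" for t
      by (auto simp: J_def W_def fun_eq_iff split: sum.splits)
    have sJ: "s (J x (v # vs)) = case_sum (J x vs) W"
      by (auto simp: s_def J_def W_def fun_eq_iff split: sum.splits)
    have D: "((\<lambda>t. P (\<lambda>a. J x vs a + t * W a)) has_field_derivative Q (case_sum (J x vs) W)) (at 0)"
      using Q(2) by blast
    have T: "((\<lambda>t. (cdd f vs (\<lambda>i. x i + t * v i) j - cdd f vs x j) / t) \<longlongrightarrow> Q (s (J x (v # vs)))) (at 0)"
      using D unfolding DERIV_def sJ using assms(2) lv JW by simp
    moreover have "cdd f (v # vs) x j = Q (s (J x (v # vs)))"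
      using T by (simp add: tendsto_Lim)
    ultimately show ?thesis by blast
  qed
  show ?thesis using pP' main by blast
qed

lemma cdd_poly:
  fixes f :: "('i \<Rightarrow> complex) \<Rightarrow> 'j \<Rightarrow> complex"
  assumes "\<And>j. polyf (\<lambda>x. f x j)"
  shows "\<exists>P. polyf P \<and> (\<forall>x vs. length vs = k \<longrightarrow> cdd f vs x j = P (J x vs))"
proof (induction k arbitrary: j)
  case 0
  have "polyf (\<lambda>y. f (\<lambda>i. y (Inl i)) j)" by (rule polyf_subst[OF assms]) (rule pproj)
  moreover have "cdd f vs x j = f (\<lambda>i. J x vs (Inl i)) j" if "length vs = 0" for x vs
    using that by (simp add: J_def)
  ultimately show ?case by blast
next
  case (Suc k)
  obtain P where P: "polyf P" "\<forall>x vs. length vs = k \<longrightarrow> cdd f vs x j = P (J x vs)" using Suc by blast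
  obtain P' where P': "polyf P'" "\<forall>x v vs. length vs = k \<longrightarrow> cdd f (v # vs) x j = P' (J x (v # vs))"
    using cdd_step[OF P] by blast
  have "cdd f vs x j = P' (J x vs)" if "length vs = Suc k" for x vs
    using that P'(2) by (cases vs) auto
  then show ?case using P'(1) by blast
qed

lemma bastiani_poly:
  fixes f :: "('i \<Rightarrow> complex) \<Rightarrow> 'j \<Rightarrow> complex"
  assumes "\<And>j. polyf (\<lambda>x. f x j)"
  shows "bastiani_holomorphic_on f UNIV"
  unfolding bastiani_holomorphic_on_def
proof (intro conjI ballI allI)
  show "open (UNIV :: ('i \<Rightarrow> complex) set)" by simp
  show "continuous_on UNIV f"
    by (intro continuous_on_coordinatewise_then_product polyf_cont assms)
next
  fix x :: "'i \<Rightarrow> complex" and v vs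
  show "((\<lambda>t. \<lambda>j. (cdd f vs (\<lambda>i. x i + t * v i) j - cdd f vs x j) / t) \<longlongrightarrow> cdd f (v # vs) x) (at 0)"
  proof (rule tendsto_coordinatewise)
    fix j
    from cdd_poly[OF assms, where k="length vs" and j=j] obtain P where
      P0: "polyf P \<and> (\<forall>x ws. length ws = length vs \<longrightarrow> cdd f ws x j = P (J x ws))" ..
    note P = conjunct1[OF P0] conjunct2[OF P0]
    show "((\<lambda>t. (cdd f vs (\<lambda>i. x i + t * v i) j - cdd f vs x j) / t) \<longlongrightarrow> cdd f (v # vs) x j) (at 0)"
    proof -
      from cdd_step[OF P] obtain P' where P': "polyf P' \<and> (\<forall>x v ws. length ws = length vs \<longrightarrow>
         ((\<lambda>t. (cdd f ws (\<lambda>i. x i + t * v i) j - cdd f ws x j) / t) \<longlongrightarrow> P' (J x (v # ws))) (at 0) \<and>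
         cdd f (v # ws) x j = P' (J x (v # ws)))" ..
      have "((\<lambda>t. (cdd f vs (\<lambda>i. x i + t * v i) j - cdd f vs x j) / t) \<longlongrightarrow> P' (J x (v # vs))) (at 0) \<and>
        cdd f (v # vs) x j = P' (J x (v # vs))" using conjunct2[OF P', rule_format, where x=x and v=v and ws=vs] by simp
      then show ?thesis by simp
    qed
  qed
next
  fix k
  show "continuous_on (UNIV \<times> UNIV) (\<lambda>(x, V :: nat \<Rightarrow> 'i \<Rightarrow> complex). cdd f (map V [0..<k]) x)"
  proof (rule continuous_on_coordinatewise_then_product)
    fix j
    from cdd_poly[OF assms, where k=k and j=j] obtain P where
      P0: "polyf P \<and> (\<forall>x ws. length ws = k \<longrightarrow> cdd f ws x j = P (J x ws))" ..
    note P = conjunct1[OF P0] conjunct2[OF P0]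
    have eq: "(\<lambda>p. (case p of (x, V) \<Rightarrow> cdd f (map V [0..<k]) x) j) = (\<lambda>p. P (J (fst p) (map (snd p) [0..<k])))"
      using P(2) by (auto simp: fun_eq_iff)
    have G: "continuous_on UNIV (\<lambda>p :: ('i \<Rightarrow> complex) \<times> (nat \<Rightarrow> 'i \<Rightarrow> complex). J (fst p) (map (snd p) [0..<k]))"
    proof (rule continuous_on_coordinatewise_then_product)
      fix a :: "'i + nat \<times> 'i"
      show "continuous_on UNIV (\<lambda>p :: ('i \<Rightarrow> complex) \<times> (nat \<Rightarrow> 'i \<Rightarrow> complex). J (fst p) (map (snd p) [0..<k]) a)"
      proof (cases a)
        case (Inl i)
        have "continuous_on UNIV (\<lambda>p :: ('i \<Rightarrow> complex) \<times> (nat \<Rightarrow> 'i \<Rightarrow> complex). fst p i)"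
          by (intro continuous_on_compose2[OF continuous_on_product_coordinates continuous_on_fst]) (auto intro: continuous_on_id)
        then show ?thesis by (simp add: Inl J_def)
      next
        case (Inr b)
        obtain n i where b: "b = (n, i)" by force
        show ?thesis
        proof (cases "n < k")
          case True
          have c1: "continuous_on UNIV (\<lambda>p :: ('i \<Rightarrow> complex) \<times> (nat \<Rightarrow> 'i \<Rightarrow> complex). snd p n)"
            by (intro continuous_on_compose2[OF continuous_on_product_coordinates continuous_on_snd]) (auto intro: continuous_on_id)
          have "continuous_on UNIV (\<lambda>p :: ('i \<Rightarrow> complex) \<times> (nat \<Rightarrow> 'i \<Rightarrow> complex). snd p n i)"
            by (rule continuous_on_compose2[OF continuous_on_product_coordinates c1]) auto
          then show ?thesis using True by (simp add: Inr b J_def)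
        next
          case False
          then show ?thesis by (simp add: Inr b J_def continuous_on_const)
        qed
      qed
    qed
    have "continuous_on UNIV (\<lambda>p :: ('i \<Rightarrow> complex) \<times> (nat \<Rightarrow> 'i \<Rightarrow> complex). P (J (fst p) (map (snd p) [0..<k])))"
      by (rule continuous_on_compose2[OF polyf_cont[OF P(1)] G]) auto
    then show "continuous_on (UNIV \<times> UNIV) (\<lambda>p. (case p of (x, V) \<Rightarrow> cdd f (map V [0..<k]) x) j)"
      unfolding eq by simp
  qed
qed


lemma polyf_lcons:
  assumes "\<And>u. polyf (\<lambda>z. E z u)"
  shows "polyf (\<lambda>z. lcons a (E z) w)"
proof (cases w)
  case Nil then show ?thesis by (simp add: pconst)
next
  case (Cons b w') then show ?thesis using assms by (cases "b = a") (simp_all add: pconst)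
qed

lemma polyf_shuffle:
  fixes A B :: "('i \<Rightarrow> complex) \<Rightarrow> 'm::finite word \<Rightarrow> complex"
  assumes "\<And>u. polyf (\<lambda>z. A z u)" "\<And>u. polyf (\<lambda>z. B z u)"
  shows "polyf (\<lambda>z. shuffle (A z) (B z) w)"
  unfolding shuffle_def case_prod_beta
  by (rule polyf_sum) (intro pmult assms pconst)

lemma polyf_dcomp: "(\<And>p. polyf (\<lambda>z. D z p)) \<Longrightarrow> polyf (\<lambda>z. dcomp (D z) a u)"
  by (cases a) (auto simp: dcomp_def intro: polyf.intros)

lemma polyf_phi:
  fixes D :: "('i \<Rightarrow> complex) \<Rightarrow> ('m::finite, complex) ser"
  assumes "\<And>p. polyf (\<lambda>z. D z p)"
  shows "polyf (\<lambda>z. phi (D z) eta one_ser w)"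
proof (induction eta arbitrary: w)
  case Nil then show ?case by (simp add: pconst)
next
  case (Cons a eta)
  have s: "polyf (\<lambda>z. shuffle (dcomp (D z) a) (phi (D z) eta one_ser) u)" for u
    by (rule polyf_shuffle) (auto intro: polyf_dcomp assms Cons.IH)
  show ?case unfolding phi.simps phi_letter_def
    by (intro padd polyf_lcons Cons.IH s)
qed

lemma polyf_comp1:
  fixes D :: "('i \<Rightarrow> complex) \<Rightarrow> ('m::finite, complex) ser"
  assumes "\<And>u. polyf (\<lambda>z. C z u)" "\<And>p. polyf (\<lambda>z. D z p)"
  shows "polyf (\<lambda>z. comp1 (C z) (D z) xi)"
  unfolding comp1_def
  by (rule polyf_sum) (intro pmult assms polyf_phi)

lemma polyf_gmult:
  fixes A B :: "('i \<Rightarrow> complex) \<Rightarrow> ('m::finite, complex) ser"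
  assumes "\<And>p. polyf (\<lambda>z. A z p)" "\<And>p. polyf (\<lambda>z. B z p)"
  shows "polyf (\<lambda>z. gmult (A z) (B z) p)"
proof -
  obtain xi j where p: "p = (xi, j)" by force
  show ?thesis unfolding p gmult_def mixed_comp_comp1
    by (intro padd assms polyf_comp1)
qed

lemma polyf_iter: "polyf (\<lambda>c. (rinvstep c ^^ n) (\<lambda>_. 0) p)"
proof (induction n arbitrary: p)
  case 0 then show ?case by (simp add: pconst)
next
  case (Suc n)
  obtain xi j where p: "p = (xi, j)" by force
  show ?case unfolding p funpow.simps o_apply rinvstep_apply
    by (intro polyf_neg polyf_comp1 pproj Suc.IH)
qed

lemma polyf_rinv: "polyf (\<lambda>c :: ('m::finite, complex) ser. rinv c p)"
proof -
  obtain xi j where p: "p = (xi, j)" by force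
  show ?thesis unfolding p rinv_def prod.case by (rule polyf_iter)
qed

lemma shuffle_of_real: "shuffle (\<lambda>u. complex_of_real (a u)) (\<lambda>u. complex_of_real (b u)) w = complex_of_real (shuffle a b w)"
  by (simp add: shuffle_def case_prod_beta)

lemma lcons_of_real: "lcons a (\<lambda>u. complex_of_real (e u)) w = complex_of_real (lcons a e w)"
  by (cases w) auto

lemma dcomp_of_real: "dcomp (\<lambda>p. complex_of_real (d p)) a = (\<lambda>u. complex_of_real (dcomp d a u))"
  by (cases a) (auto simp: dcomp_def)

lemma phi_of_real: "phi (\<lambda>p. complex_of_real (d p)) eta (\<lambda>u. complex_of_real (e u)) w = complex_of_real (phi d eta e w)"
proof (induction eta arbitrary: w)
  case Nil then show ?case by simp
next
  case (Cons a eta)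
  have IH: "phi (\<lambda>p. complex_of_real (d p)) eta (\<lambda>u. complex_of_real (e u)) = (\<lambda>u. complex_of_real (phi d eta e u))"
    using Cons.IH by auto
  have SF: "shuffle (\<lambda>u. complex_of_real (a' u)) (\<lambda>u. complex_of_real (b' u)) = (\<lambda>w. complex_of_real (shuffle a' b' w))" for a' b' :: "'a word \<Rightarrow> real"
    by (rule ext) (rule shuffle_of_real)
  show ?case
    unfolding phi.simps phi_letter_def IH dcomp_of_real SF lcons_of_real by simp
qed

lemma one_ser_of_real: "(one_ser :: 'm word \<Rightarrow> complex) = (\<lambda>u. complex_of_real (one_ser u))"
  by (auto simp: one_ser_def)

lemma gmult_of_real:
  fixes a b :: "('m::finite, real) ser"
  shows "gmult (\<lambda>p. complex_of_real (a p)) (\<lambda>p. complex_of_real (b p)) = (\<lambda>p. complex_of_real (gmult a b p))"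
proof
  fix p :: "'m word \<times> 'm"
  obtain xi j where p: "p = (xi, j)" by force
  have "phi (\<lambda>p. complex_of_real (b p)) eta one_ser xi = complex_of_real (phi b eta one_ser xi)" for eta
    by (subst one_ser_of_real) (rule phi_of_real)
  then show "gmult (\<lambda>p. complex_of_real (a p)) (\<lambda>p. complex_of_real (b p)) p = complex_of_real (gmult a b p)"
    by (simp add: p gmult_def mixed_comp_def)
qed

lemma rinv_unique:
  fixes b x :: "('m::finite, 'k::comm_ring_1) ser"
  assumes "gmult b x = (\<lambda>_. 0)"
  shows "x = rinv b"
proof -
  have "x = gmult (gmult (rinv b) b) x" using group_inverse[of b] by (simp add: gmult_unit2)
  also have "\<dots> = gmult (rinv b) (gmult b x)" by (rule gmult_assoc)
  also have "\<dots> = rinv b" by (simp add: assms gmult_unit1)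
  finally show ?thesis .
qed

lemma rinv_of_real:
  fixes a :: "('m::finite, real) ser"
  shows "rinv (complex_of_real \<circ> a) = complex_of_real \<circ> rinv a"
proof -
  have "gmult (complex_of_real \<circ> a) (complex_of_real \<circ> rinv a) = (\<lambda>_. 0)"
    using gmult_of_real[of a "rinv a"] group_inverse[of a] by (simp add: o_def)
  then show ?thesis using rinv_unique by metis
qed

theorem corollary5p2:
  shows "analytic_lie_group_C (gmult :: ('m::finite, complex) ser \<Rightarrow> _ \<Rightarrow> _) (\<lambda>_. 0)
       \<and> analytic_lie_group_R (gmult :: ('m::finite, real) ser \<Rightarrow> _ \<Rightarrow> _) (\<lambda>_. 0)"
proof
  have hm: "bastiani_holomorphic_on (\<lambda>z. gmult (z \<circ> Inl) (z \<circ> Inr) :: ('m, complex) ser) UNIV"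
    by (rule bastiani_poly, rule polyf_gmult) (simp_all add: pproj)
  have hi: "bastiani_holomorphic_on (rinv :: ('m, complex) ser \<Rightarrow> _) UNIV"
    by (rule bastiani_poly, rule polyf_rinv)
  show "analytic_lie_group_C (gmult :: ('m::finite, complex) ser \<Rightarrow> _ \<Rightarrow> _) (\<lambda>_. 0)"
    unfolding analytic_lie_group_C_def
    using gmult_assoc gmult_unit1 gmult_unit2 group_inverse hm hi by blast
  have ri: "bastiani_real_analytic_on (rinv :: ('m, real) ser \<Rightarrow> _) UNIV"
    unfolding bastiani_real_analytic_on_def
    using hi rinv_of_real by (intro conjI exI[of _ UNIV] exI[of _ rinv]) auto
  have rm: "bastiani_real_analytic_on (\<lambda>z. gmult (z \<circ> Inl) (z \<circ> Inr) :: ('m, real) ser) UNIV"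
    unfolding bastiani_real_analytic_on_def
  proof (intro conjI exI[of _ UNIV] exI[of _ "\<lambda>z. gmult (z \<circ> Inl) (z \<circ> Inr) :: ('m, complex) ser"] ballI)
    fix x :: "('m word \<times> 'm) + ('m word \<times> 'm) \<Rightarrow> real"
    show "gmult ((complex_of_real \<circ> x) \<circ> Inl) ((complex_of_real \<circ> x) \<circ> Inr) = complex_of_real \<circ> gmult (x \<circ> Inl) (x \<circ> Inr)"
      using gmult_of_real[of "x \<circ> Inl" "x \<circ> Inr"] by (simp add: o_def)
  qed (use hm in auto)
  show "analytic_lie_group_R (gmult :: ('m::finite, real) ser \<Rightarrow> _ \<Rightarrow> _) (\<lambda>_. 0)"
    unfolding analytic_lie_group_R_def
    using gmult_assoc gmult_unit1 gmult_unit2 group_inverse ri rm by blast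
qed


end
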